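(* Let $\mathbf{s}(\lambda)$ and $\mathbf{v}(i)$ be $N$-vectors with entries $s_j(\lambda) = S(e_j, e_j; \lambda)$ and $v_j(i) = \delta_{ij}$, and let $\bar{\mathbf{s}}(\lambda) = (\mathbf{s}(\lambda), \mathbf{s}(\lambda))$ and $\bar{\mathbf{v}}(i) = (\mathbf{v}(i), \mathbf{v}(i))$ be the corresponding $2N$-vectors. Then \[ G_i(\lambda, z) = S(e_i, e_i; \lambda) + \sum_{d = 1}^{\infty} \bar{\mathbf{v}}^{T}(i)\, \mathbf{K}(\lambda, z)^d\, \bar{\mathbf{s}}(\lambda). \]
   Context: Fix $N \geq 3$. Let $\mathcal{G}_N$ be the groupoid with objects $\{1,\dots,N\}$, generated by arrows $A_{i,j}^{(k)}$ ($i \neq j$, $k \in \{-1,1\}$) with source $i$ and target $j$, subject to the relations $A_{i,j}^{(k)} A_{j,\ell}^{(k)} = A_{i,\ell}^{(k)}$ (with $A_{i,i}^{(k)} := e_i$, the unit at $i$). Every arrow has a unique reduced representation, either empty or an alternating product $A_{i_1,i_2}^{(k)} A_{i_2,i_3}^{(-k)} \cdots$ with consecutive indices distinct. A metric $|\cdot|_{\mathcal{M}}$ generated by the generators assigns a nonnegative value to each generator and is additive over the reduced representation, with $|e_i|_{\mathcal{M}} = 0$. Let $(W_n)_{n \ge 0}$ be a Markov chain on the arrows with $P(W_{n+1} = y \mid W_n = x) = p_{i,j}^{(k)}$ if $x^{-1}y = A_{i,j}^{(k)}$ ($i \neq j$) and $0$ otherwise, where all $p_{i,j}^{(k)} \in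 (0,1)$ and $\sum_{j,k} p_{i,j}^{(k)} = 1$ for each $i$. Write $P_x, E_x$ for the chain started at $W_0 = x$. For arrows $x, y$ define $S(x, y; \lambda) = \sum_{n\ge 0} P_x(W_n = y)\lambda^n$, let $T(0,y) = \inf\{k \ge 0 : W_k = W_0 y\}$, and let $R_{i,j}^{(k)}(\lambda) = E_{e_i}[\lambda^{T(0, A_{i,j}^{(k)})}]$. Define $G_i(\lambda, z) = E_{e_i}\big[\sum_{n\ge 0} z^{|W_n|_{\mathcal{M}}} \lambda^n\big]$. Let $\mathbf{B}(k; \lambda, z)$ be the $N \times N$ matrix with entries $\mathbf{B}_{i,j}(k; \lambda, z) = (1 - \delta_{i,j})\, z^{|A_{i,j}^{(k)}|_{\mathcal{M}}} R_{i,j}^{(k)}(\lambda)$, and let $\mathbf{K}(\lambda, z)$ be the $2N \times 2N$ block matrix $\begin{pmatrix} \mathbf{0} & \mathbf{B}(1; \lambda, z) \\ \mathbf{B}(-1; \lambda, z) & \mathbf{0} \end{pmatrix}$. *)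

theory Defs
  imports Complex_Main "HOL-Library.Extended_Nonnegative_Real"
begin

text \<open>Arrows of the groupoid G_N in reduced form.  An arrow is a pair (s, ws):
  s is the source object, and ws = [(k1,i2),(k2,i3),...] lists the letters of the
  reduced word A_{s,i2}^{(k1)} A_{i2,i3}^{(k2)} ..., where the signs alternate and
  consecutive objects are distinct.\<close>

type_synonym arrow = "nat \<times> (int \<times> nat) list"

definition unit_arr :: "nat \<Rightarrow> arrow" where
  "unit_arr i = (i, [])"

definition gen_arr :: "nat \<Rightarrow> nat \<Rightarrow> int \<Rightarrow> arrow" where
  "gen_arr i j k = (i, [(k, j)])"

definition tgt :: "arrow \<Rightarrow> nat" where
  "tgt x = (if snd x = [] then fst x else snd (last (snd x)))"

text \<open>Right multiplication of an arrow x by the generator A_{tgt x, j}^{(k)},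
  computed on reduced words using A_{i,j}^{(k)} A_{j,l}^{(k)} = A_{i,l}^{(k)}.\<close>

definition mult_gen :: "arrow \<Rightarrow> nat \<Rightarrow> int \<Rightarrow> arrow" where
  "mult_gen x j k =
    (let s = fst x; ws = snd x in
     if ws = [] then (s, [(k, j)])
     else if fst (last ws) \<noteq> k then (s, ws @ [(k, j)])
     else (let prev = tgt (s, butlast ws) in
           if j = prev then (s, butlast ws) else (s, butlast ws @ [(k, j)])))"

text \<open>Metric generated by the generators: additive over the reduced word.
  M i j k = |A_{i,j}^{(k)}|_M.\<close>

fun wlen :: "(nat \<Rightarrow> nat \<Rightarrow> int \<Rightarrow> real) \<Rightarrow> nat \<Rightarrow> (int \<times> nat) list \<Rightarrow> real" where
  "wlen M s [] = 0"
| "wlen M s ((k, j) # ws) = M s j k + wlen M j ws"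

definition arr_norm :: "(nat \<Rightarrow> nat \<Rightarrow> int \<Rightarrow> real) \<Rightarrow> arrow \<Rightarrow> real" where
  "arr_norm M x = wlen M (fst x) (snd x)"

definition steps :: "nat \<Rightarrow> nat \<Rightarrow> (nat \<times> int) set" where
  "steps N i = ({1..N} - {i}) \<times> {-1, 1}"

primrec Ex :: "nat \<Rightarrow> (nat \<Rightarrow> nat \<Rightarrow> int \<Rightarrow> real) \<Rightarrow> nat \<Rightarrow> (arrow \<Rightarrow> real) \<Rightarrow> arrow \<Rightarrow> real" where
  "Ex N p 0 f x = f x"
| "Ex N p (Suc n) f x =
     (\<Sum>(j, k)\<in>steps N (tgt x). p (tgt x) j k * Ex N p n f (mult_gen x j k))"

definition Pn :: "nat \<Rightarrow> (nat \<Rightarrow> nat \<Rightarrow> int \<Rightarrow> real) \<Rightarrow> nat \<Rightarrow> arrow \<Rightarrow> arrow \<Rightarrow> real" where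
  "Pn N p n x y = Ex N p n (\<lambda>w. if w = y then 1 else 0) x"

text \<open>P_x(T = n), where T is the first time k >= 0 with W_k = y.\<close>

primrec Fn :: "nat \<Rightarrow> (nat \<Rightarrow> nat \<Rightarrow> int \<Rightarrow> real) \<Rightarrow> nat \<Rightarrow> arrow \<Rightarrow> arrow \<Rightarrow> real" where
  "Fn N p 0 x y = (if x = y then 1 else 0)"
| "Fn N p (Suc n) x y =
     (if x = y then 0
      else (\<Sum>(j, k)\<in>steps N (tgt x). p (tgt x) j k * Fn N p n (mult_gen x j k) y))"

definition Sgf :: "nat \<Rightarrow> (nat \<Rightarrow> nat \<Rightarrow> int \<Rightarrow> real) \<Rightarrow> arrow \<Rightarrow> arrow \<Rightarrow> real \<Rightarrow> ennreal" where
  "Sgf N p x y lam = (\<Sum>n. ennreal (Pn N p n x y) * ennreal lam ^ n)"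

text \<open>R_{i,j}^{(k)}(lam) = E_{e_i}[lam^T ; T < \<infinity>] with T = T(0, A_{i,j}^{(k)}).\<close>

definition Rgf :: "nat \<Rightarrow> (nat \<Rightarrow> nat \<Rightarrow> int \<Rightarrow> real) \<Rightarrow> nat \<Rightarrow> nat \<Rightarrow> int \<Rightarrow> real \<Rightarrow> ennreal" where
  "Rgf N p i j k lam =
     (\<Sum>n. ennreal (Fn N p n (unit_arr i) (gen_arr i j k)) * ennreal lam ^ n)"

definition Ggf :: "nat \<Rightarrow> (nat \<Rightarrow> nat \<Rightarrow> int \<Rightarrow> real) \<Rightarrow> (nat \<Rightarrow> nat \<Rightarrow> int \<Rightarrow> real)
    \<Rightarrow> nat \<Rightarrow> real \<Rightarrow> real \<Rightarrow> ennreal" where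
  "Ggf N p M i lam z =
     (\<Sum>n. ennreal (Ex N p n (\<lambda>w. z powr arr_norm M w) (unit_arr i)) * ennreal lam ^ n)"

definition Bmat :: "nat \<Rightarrow> (nat \<Rightarrow> nat \<Rightarrow> int \<Rightarrow> real) \<Rightarrow> (nat \<Rightarrow> nat \<Rightarrow> int \<Rightarrow> real)
    \<Rightarrow> int \<Rightarrow> real \<Rightarrow> real \<Rightarrow> nat \<Rightarrow> nat \<Rightarrow> ennreal" where
  "Bmat N p M k lam z i j =
     (if i = j then 0 else ennreal (z powr M i j k) * Rgf N p i j k lam)"

definition Kmat :: "nat \<Rightarrow> (nat \<Rightarrow> nat \<Rightarrow> int \<Rightarrow> real) \<Rightarrow> (nat \<Rightarrow> nat \<Rightarrow> int \<Rightarrow> real)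
    \<Rightarrow> real \<Rightarrow> real \<Rightarrow> nat \<Rightarrow> nat \<Rightarrow> ennreal" where
  "Kmat N p M lam z a b =
     (if a \<le> N \<and> N < b then Bmat N p M 1 lam z a (b - N)
      else if N < a \<and> b \<le> N then Bmat N p M (-1) lam z (a - N) b
      else 0)"

primrec mat_pow :: "nat \<Rightarrow> (nat \<Rightarrow> nat \<Rightarrow> ennreal) \<Rightarrow> nat \<Rightarrow> nat \<Rightarrow> nat \<Rightarrow> ennreal" where
  "mat_pow m A 0 a b = (if a = b then 1 else 0)"
| "mat_pow m A (Suc d) a b = (\<Sum>c\<in>{1..m}. mat_pow m A d a c * A c b)"

definition vbar :: "nat \<Rightarrow> nat \<Rightarrow> nat \<Rightarrow> ennreal" where
  "vbar N i a = (if a = i \<or> a = i + N then 1 else 0)"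

definition sbar :: "nat \<Rightarrow> (nat \<Rightarrow> nat \<Rightarrow> int \<Rightarrow> real) \<Rightarrow> real \<Rightarrow> nat \<Rightarrow> ennreal" where
  "sbar N p lam b =
     (let j = (if b \<le> N then b else b - N) in Sgf N p (unit_arr j) (unit_arr j) lam)"

end

theory Submission
  imports Defs "HOL-Analysis.Analysis"
begin


lemma suminf_swap_ennreal:
  fixes f :: "nat \<Rightarrow> nat \<Rightarrow> ennreal"
  shows "(\<Sum>i. \<Sum>j. f i j) = (\<Sum>j. \<Sum>i. f i j)"
proof -
  have "(\<Sum>i. \<Sum>j. f i j) = (\<Sum>i. \<integral>\<^sup>+j. f i j \<partial>count_space UNIV)"
    by (simp add: nn_integral_count_space_nat)
  also have "\<dots> = (\<integral>\<^sup>+j. (\<Sum>i. f i j) \<partial>count_space UNIV)"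
    by (rule nn_integral_suminf[symmetric]) auto
  also have "\<dots> = (\<Sum>j. \<Sum>i. f i j)"
    by (simp add: nn_integral_count_space_nat)
  finally show ?thesis .
qed

lemma suminf_shift_ennreal:
  fixes c :: "nat \<Rightarrow> ennreal"
  shows "(\<Sum>n. if m \<le> n then c n else 0) = (\<Sum>l. c (l + m))"
proof -
  have "(\<Sum>n. if m \<le> n then c n else 0) = (\<Sum>l. (if m \<le> l + m then c (l+m) else 0)) + (\<Sum>n<m. if m \<le> n then c n else 0)"
    using suminf_offset[OF summableI, of "\<lambda>n. if m \<le> n then c n else 0" m] by simp
  then show ?thesis by simp
qed

lemma cauchy_ennreal:
  fixes a b :: "nat \<Rightarrow> real" and lam :: real
  assumes "\<And>n. 0 \<le> a n" "\<And>n. 0 \<le> b n"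
  shows "(\<Sum>n. ennreal (\<Sum>m\<le>n. a m * b (n - m)) * ennreal lam ^ n)
       = (\<Sum>n. ennreal (a n) * ennreal lam ^ n) * (\<Sum>n. ennreal (b n) * ennreal lam ^ n)"
proof -
  have "(\<Sum>n. ennreal (\<Sum>m\<le>n. a m * b (n - m)) * ennreal lam ^ n)
      = (\<Sum>n. \<Sum>m. if m \<le> n then ennreal (a m) * ennreal (b (n - m)) * ennreal lam ^ n else 0)"
  proof (rule suminf_cong)
    fix n
    have "ennreal (\<Sum>m\<le>n. a m * b (n - m)) = (\<Sum>m\<le>n. ennreal (a m) * ennreal (b (n - m)))"
      using assms by (simp add: ennreal_mult[symmetric])
    hence "ennreal (\<Sum>m\<le>n. a m * b (n - m)) * ennreal lam ^ n
        = (\<Sum>m\<le>n. ennreal (a m) * ennreal (b (n - m)) * ennreal lam ^ n)"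
      by (simp add: sum_distrib_right)
    also have "\<dots> = (\<Sum>m. if m \<le> n then ennreal (a m) * ennreal (b (n - m)) * ennreal lam ^ n else 0)"
      by (subst suminf_finite[of "{..n}"]) auto
    finally show "ennreal (\<Sum>m\<le>n. a m * b (n - m)) * ennreal lam ^ n = \<dots>" .
  qed
  also have "\<dots> = (\<Sum>m. \<Sum>n. if m \<le> n then ennreal (a m) * ennreal (b (n - m)) * ennreal lam ^ n else 0)"
    by (rule suminf_swap_ennreal)
  also have "\<dots> = (\<Sum>m. \<Sum>l. ennreal (a m) * ennreal (b l) * ennreal lam ^ (l + m))"
    by (subst suminf_shift_ennreal) simp
  also have "\<dots> = (\<Sum>m. ennreal (a m) * ennreal lam ^ m * (\<Sum>l. ennreal (b l) * ennreal lam ^ l))"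
    by (simp add: power_add mult_ac flip: ennreal_suminf_cmult)
  also have "\<dots> = (\<Sum>n. ennreal (a n) * ennreal lam ^ n) * (\<Sum>n. ennreal (b n) * ennreal lam ^ n)"
    by simp
  finally show ?thesis .
qed



fun wfw :: "nat \<Rightarrow> (int \<times> nat) list \<Rightarrow> bool" where
  "wfw s [] = True"
| "wfw s ((k, j) # rest) = (j \<noteq> s \<and> wfw j rest \<and> (rest = [] \<or> fst (hd rest) \<noteq> k))"

lemma tgt_Nil[simp]: "tgt (s, []) = s"
  by (simp add: tgt_def)

lemma tgt_snoc[simp]: "tgt (s, ws @ [l]) = snd l"
  by (simp add: tgt_def)

lemma tgt_single[simp]: "tgt (s, [l]) = snd l"
  by (simp add: tgt_def)

lemma tgt_Cons: "tgt (s, l # ws) = tgt (snd l, ws)"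
  by (cases ws rule: rev_cases) (auto simp: tgt_def)

lemma wfw_snoc: "wfw s (ws @ [(k,j)]) \<longleftrightarrow> wfw s ws \<and> j \<noteq> tgt (s, ws) \<and> (ws = [] \<or> fst (last ws) \<noteq> k)"
proof (induction ws arbitrary: s)
  case Nil
  then show ?case by simp
next
  case (Cons a ws)
  obtain k' j' where a: "a = (k', j')" by (cases a)
  show ?case using Cons[of j'] by (cases ws) (auto simp: a tgt_Cons)
qed

lemma mult_gen_Nil[simp]: "mult_gen (s, []) j k = (s, [(k, j)])"
  by (simp add: mult_gen_def)

lemma mult_gen_snoc: "mult_gen (s, ws @ [(k', t)]) j k =
   (if k' \<noteq> k then (s, ws @ [(k', t), (k, j)])
    else if j = tgt (s, ws) then (s, ws) else (s, ws @ [(k, j)]))"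
  by (simp add: mult_gen_def Let_def)

lemma fst_mult_gen[simp]: "fst (mult_gen x j k) = fst x"
  by (simp add: mult_gen_def Let_def)

lemma tgt_mult_gen_in: "tgt (mult_gen x j k) \<in> {j} \<union> snd ` set (snd x) \<union> {fst x}"
proof -
  obtain s ws where x: "x = (s, ws)" by (cases x)
  show ?thesis
  proof (cases ws rule: rev_cases)
    case Nil then show ?thesis by (simp add: x)
  next
    case (snoc ws0 l)
    obtain k' t where l: "l = (k', t)" by (cases l)
    show ?thesis
      by (cases ws0 rule: rev_cases) (auto simp: x snoc l mult_gen_def Let_def tgt_def)
  qed
qed

lemma set_mult_gen: "set (snd (mult_gen x j k)) \<subseteq> set (snd x) \<union> {(k, j)}"
proof -
  obtain s ws where x: "x = (s, ws)" by (cases x)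
  show ?thesis
  proof (cases ws rule: rev_cases)
    case Nil then show ?thesis by (simp add: x)
  next
    case (snoc ws0 l)
    obtain k' t where l: "l = (k', t)" by (cases l)
    show ?thesis by (auto simp: x snoc l mult_gen_snoc)
  qed
qed

lemma length_mult_gen: "length (snd (mult_gen x j k)) \<le> Suc (length (snd x))"
proof -
  obtain s ws where x: "x = (s, ws)" by (cases x)
  show ?thesis
  proof (cases ws rule: rev_cases)
    case Nil then show ?thesis by (simp add: x)
  next
    case (snoc ws0 l)
    obtain k' t where l: "l = (k', t)" by (cases l)
    show ?thesis by (auto simp: x snoc l mult_gen_snoc)
  qed
qed

lemma wfw_mult_gen:
  assumes "wfw (fst x) (snd x)" "j \<noteq> tgt x"
  shows "wfw (fst x) (snd (mult_gen x j k))"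
proof -
  obtain s ws where x: "x = (s, ws)" by (cases x)
  show ?thesis
  proof (cases ws rule: rev_cases)
    case Nil then show ?thesis using assms by (simp add: x)
  next
    case (snoc ws0 l)
    obtain k' t where l: "l = (k', t)" by (cases l)
    have w0: "wfw s ws0" "t \<noteq> tgt (s, ws0)" "ws0 = [] \<or> fst (last ws0) \<noteq> k'"
      using assms by (auto simp: x snoc l wfw_snoc)
    show ?thesis
    proof (cases "k' = k")
      case False
      then show ?thesis using assms w0
        by (simp add: x snoc l mult_gen_snoc wfw_snoc[where ws="ws0 @ [(k', t)]", simplified])
    next
      case True
      then show ?thesis using assms w0
        by (auto simp: x snoc l mult_gen_snoc wfw_snoc)
    qed
  qed
qed

definition gpre :: "nat \<Rightarrow> nat \<Rightarrow> int \<Rightarrow> arrow \<Rightarrow> arrow" where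
  "gpre s t k0 x = (case snd x of [] \<Rightarrow> (s, [(k0, t)])
     | (k, j) # rest \<Rightarrow> if k \<noteq> k0 then (s, (k0, t) # snd x)
                       else if j = s then (s, rest) else (s, (k0, j) # rest))"

lemma fst_gpre[simp]: "fst (gpre s t k0 x) = s"
  by (auto simp: gpre_def split: list.splits)

lemma gpre_Nil[simp]: "gpre s t k0 (t, []) = (s, [(k0, t)])"
  by (simp add: gpre_def)

lemma gpre_Cons: "gpre s t k0 (t, (k, j) # rest) =
   (if k \<noteq> k0 then (s, (k0, t) # (k, j) # rest)
    else if j = s then (s, rest) else (s, (k0, j) # rest))"
  by (simp add: gpre_def)

lemma gpre_inv:
  assumes "s \<noteq> t" "fst x = t" "wfw t (snd x)"
  shows "gpre t s k0 (gpre s t k0 x) = x"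
proof -
  obtain ws where x: "x = (t, ws)" using assms by (cases x) auto
  show ?thesis
  proof (cases ws)
    case Nil then show ?thesis using assms by (simp add: x gpre_Cons)
  next
    case (Cons l rest)
    obtain k j where l: "l = (k, j)" by (cases l)
    show ?thesis using assms
      by (cases rest) (auto simp: x Cons l gpre_Cons gpre_def)
  qed
qed

lemma gpre_inj:
  assumes "s \<noteq> t" "fst x = t" "wfw t (snd x)" "fst y = t" "wfw t (snd y)"
  shows "gpre s t k0 x = gpre s t k0 y \<longleftrightarrow> x = y"
  using gpre_inv[OF assms(1-3), of k0] gpre_inv[OF assms(1,4,5), of k0] by metis

lemma tgt_gpre:
  assumes "s \<noteq> t" "fst x = t" "wfw t (snd x)"
  shows "tgt (gpre s t k0 x) = tgt x"
proof -
  obtain ws where x: "x = (t, ws)" using assms by (cases x) auto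
  show ?thesis
  proof (cases ws)
    case Nil then show ?thesis using assms by (simp add: x)
  next
    case (Cons l rest)
    obtain k j where l: "l = (k, j)" by (cases l)
    show ?thesis using assms
      by (cases rest) (auto simp: x Cons l gpre_Cons tgt_Cons)
  qed
qed

lemma gpre_snoc:
  assumes "ws \<noteq> []"
  shows "gpre s t k0 (t, ws @ [l]) = (s, snd (gpre s t k0 (t, ws)) @ [l])"
proof -
  obtain l0 rest where ws: "ws = l0 # rest" using assms by (cases ws) auto
  obtain k j where l0: "l0 = (k, j)" by (cases l0)
  show ?thesis by (simp add: ws l0 gpre_Cons)
qed

lemma wfw_gpre:
  assumes "s \<noteq> t" "fst x = t" "wfw t (snd x)"
  shows "wfw s (snd (gpre s t k0 x))"
proof -
  obtain ws where x: "x = (t, ws)" using assms by (cases x) auto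
  show ?thesis
  proof (cases ws)
    case Nil then show ?thesis using assms by (simp add: x)
  next
    case (Cons l rest)
    obtain k j where l: "l = (k, j)" by (cases l)
    show ?thesis using assms
      by (cases rest) (auto simp: x Cons l gpre_Cons)
  qed
qed

lemma gpre_comm:
  assumes "s \<noteq> t" "fst x = t" "wfw t (snd x)" "j \<noteq> tgt x"
  shows "mult_gen (gpre s t k0 x) j k = gpre s t k0 (mult_gen x j k)"
proof -
  obtain ws where x: "x = (t, ws)" using assms by (cases x) auto
  show ?thesis
  proof (cases ws rule: rev_cases)
    case Nil then show ?thesis using assms
      by (auto simp: x gpre_Cons mult_gen_snoc[where ws="[]", simplified])
  next
    case (snoc ws0 l)
    obtain k' a where l: "l = (k', a)" by (cases l)
    show ?thesis
    proof (cases "ws0 = []")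
      case True
      then show ?thesis using assms
        by (auto simp: x snoc l gpre_Cons mult_gen_def Let_def tgt_def)
    next
      case False
      have w0: "wfw t ws0" using assms by (simp add: x snoc l wfw_snoc)
      have tg: "tgt (s, snd (gpre s t k0 (t, ws0))) = tgt (t, ws0)"
        using tgt_gpre[OF assms(1), of "(t, ws0)" k0] w0
        by (metis fst_gpre prod.collapse fst_conv snd_conv)
      have gg: "gpre s t k0 (t, ws0) = (s, snd (gpre s t k0 (t, ws0)))"
        by (metis fst_gpre prod.collapse)
      show ?thesis using False tg
        apply (simp add: x snoc l gpre_snoc mult_gen_snoc)
        apply (simp add: gpre_snoc[where ws="ws0 @ [(k', a)]", simplified] gg[symmetric] gpre_snoc[OF False])
        done
    qed
  qed
qed



lemma Pn_0[simp]: "Pn N p 0 x y = (if x = y then 1 else 0)"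
  by (simp add: Pn_def)

lemma Pn_Suc: "Pn N p (Suc n) x y =
   (\<Sum>(j, k)\<in>steps N (tgt x). p (tgt x) j k * Pn N p n (mult_gen x j k) y)"
  by (simp add: Pn_def)

lemma Fn_same: "Fn N p m x x = (if m = 0 then 1 else 0)"
  by (cases m) auto

lemma finite_steps[simp]: "finite (steps N a)"
  by (simp add: steps_def)

lemma steps_neq: "(j, k) \<in> steps N a \<Longrightarrow> j \<noteq> a"
  by (simp add: steps_def)

lemma Fn_gpre:
  assumes st: "s \<noteq> t" and w: "fst w = t" "wfw t (snd w)" and v: "fst v = t" "wfw t (snd v)"
  shows "Fn N p n (gpre s t k0 w) (gpre s t k0 v) = Fn N p n w v"
  using w
proof (induction n arbitrary: w)
  case 0
  then show ?case using gpre_inj[OF st _ _ v, of w k0] by simp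
next
  case (Suc n)
  have eq: "gpre s t k0 w = gpre s t k0 v \<longleftrightarrow> w = v" using gpre_inj[OF st Suc.prems v] .
  have tg: "tgt (gpre s t k0 w) = tgt w" using tgt_gpre[OF st Suc.prems] .
  have "(\<Sum>(j, k)\<in>steps N (tgt w). p (tgt w) j k * Fn N p n (mult_gen (gpre s t k0 w) j k) (gpre s t k0 v))
      = (\<Sum>(j, k)\<in>steps N (tgt w). p (tgt w) j k * Fn N p n (mult_gen w j k) v)"
  proof (rule sum.cong[OF refl], clarify)
    fix j k assume jk: "(j, k) \<in> steps N (tgt w)"
    have "mult_gen (gpre s t k0 w) j k = gpre s t k0 (mult_gen w j k)"
      using gpre_comm[OF st Suc.prems steps_neq[OF jk]] .
    moreover have "wfw t (snd (mult_gen w j k))"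
      using wfw_mult_gen[of w j k] Suc.prems steps_neq[OF jk] by simp
    ultimately show "p (tgt w) j k * Fn N p n (mult_gen (gpre s t k0 w) j k) (gpre s t k0 v)
        = p (tgt w) j k * Fn N p n (mult_gen w j k) v"
      using Suc.IH[of "mult_gen w j k"] Suc.prems by simp
  qed
  then show ?case by (simp add: eq tg)
qed

lemma Pn_gpre:
  assumes st: "s \<noteq> t" and w: "fst w = t" "wfw t (snd w)" and v: "fst v = t" "wfw t (snd v)"
  shows "Pn N p n (gpre s t k0 w) (gpre s t k0 v) = Pn N p n w v"
  using w
proof (induction n arbitrary: w)
  case 0
  then show ?case using gpre_inj[OF st _ _ v, of w k0] by simp
next
  case (Suc n)
  have tg: "tgt (gpre s t k0 w) = tgt w" using tgt_gpre[OF st Suc.prems] .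
  have "(\<Sum>(j, k)\<in>steps N (tgt w). p (tgt w) j k * Pn N p n (mult_gen (gpre s t k0 w) j k) (gpre s t k0 v))
      = (\<Sum>(j, k)\<in>steps N (tgt w). p (tgt w) j k * Pn N p n (mult_gen w j k) v)"
  proof (rule sum.cong[OF refl], clarify)
    fix j k assume jk: "(j, k) \<in> steps N (tgt w)"
    have "mult_gen (gpre s t k0 w) j k = gpre s t k0 (mult_gen w j k)"
      using gpre_comm[OF st Suc.prems steps_neq[OF jk]] .
    moreover have "wfw t (snd (mult_gen w j k))"
      using wfw_mult_gen[of w j k] Suc.prems steps_neq[OF jk] by simp
    ultimately show "p (tgt w) j k * Pn N p n (mult_gen (gpre s t k0 w) j k) (gpre s t k0 v)
        = p (tgt w) j k * Pn N p n (mult_gen w j k) v"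
      using Suc.IH[of "mult_gen w j k"] Suc.prems by simp
  qed
  then show ?case by (simp add: tg Pn_Suc)
qed

lemma cut_lemma:
  assumes y'C: "y' \<in> C"
    and clos: "\<And>x j k. x \<in> C \<Longrightarrow> x \<noteq> y' \<Longrightarrow> (j, k) \<in> steps N (tgt x) \<Longrightarrow> mult_gen x j k \<in> C"
    and yC: "y \<in> C \<Longrightarrow> y = y'"
    and xC: "x \<in> C"
  shows "Pn N p n x y = (\<Sum>m\<le>n. Fn N p m x y' * Pn N p (n - m) y' y)"
  using xC
proof (induction n arbitrary: x)
  case 0
  then show ?case using yC by auto
next
  case (Suc n)
  show ?case
  proof (cases "x = y'")
    case True
    have "(\<Sum>m\<le>Suc n. Fn N p m x y' * Pn N p (Suc n - m) y' y)
        = Fn N p 0 x y' * Pn N p (Suc n - 0) y' y + (\<Sum>m\<le>n. Fn N p (Suc m) x y' * Pn N p (Suc n - Suc m) y' y)"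
      by (rule sum.atMost_Suc_shift)
    then show ?thesis using True by (simp add: Fn_same)
  next
    case False
    have "(\<Sum>m\<le>Suc n. Fn N p m x y' * Pn N p (Suc n - m) y' y)
        = Fn N p 0 x y' * Pn N p (Suc n - 0) y' y + (\<Sum>m\<le>n. Fn N p (Suc m) x y' * Pn N p (Suc n - Suc m) y' y)"
      by (rule sum.atMost_Suc_shift)
    also have "\<dots> = (\<Sum>m\<le>n. (\<Sum>(j, k)\<in>steps N (tgt x). p (tgt x) j k * Fn N p m (mult_gen x j k) y') * Pn N p (n - m) y' y)"
      using False by simp
    also have "\<dots> = (\<Sum>(j, k)\<in>steps N (tgt x). p (tgt x) j k * (\<Sum>m\<le>n. Fn N p m (mult_gen x j k) y' * Pn N p (n - m) y' y))"
      by (simp add: sum_distrib_left sum_distrib_right case_prod_beta mult.assoc sum.swap[of _ "{..n}"])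
    also have "\<dots> = (\<Sum>(j, k)\<in>steps N (tgt x). p (tgt x) j k * Pn N p n (mult_gen x j k) y)"
    proof (rule sum.cong[OF refl], clarify)
      fix j k assume jk: "(j, k) \<in> steps N (tgt x)"
      have "mult_gen x j k \<in> C" using clos[OF Suc.prems False jk] .
      then show "p (tgt x) j k * (\<Sum>m\<le>n. Fn N p m (mult_gen x j k) y' * Pn N p (n - m) y' y)
          = p (tgt x) j k * Pn N p n (mult_gen x j k) y"
        using Suc.IH[of "mult_gen x j k"] by simp
    qed
    also have "\<dots> = Pn N p (Suc n) x y" by (simp add: Pn_Suc)
    finally show ?thesis ..
  qed
qed

definition inr :: "nat \<Rightarrow> arrow \<Rightarrow> bool" where
  "inr N x \<longleftrightarrow> fst x \<in> {1..N} \<and> (\<forall>l\<in>set (snd x). snd l \<in> {1..N})"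

lemma inr_tgt: "inr N x \<Longrightarrow> tgt x \<in> {1..N}"
  by (auto simp: inr_def tgt_def)

lemma inr_mult_gen: "inr N x \<Longrightarrow> (j, k) \<in> steps N a \<Longrightarrow> inr N (mult_gen x j k)"
  using set_mult_gen[of x j k] by (auto simp: inr_def steps_def)

lemma Fn_nonneg:
  assumes pn: "\<And>a j k. a \<in> {1..N} \<Longrightarrow> (j, k) \<in> steps N a \<Longrightarrow> 0 \<le> p a j k"
  shows "inr N x \<Longrightarrow> 0 \<le> Fn N p n x y"
proof (induction n arbitrary: x)
  case 0 then show ?case by simp
next
  case (Suc n)
  have "\<And>j k. (j, k) \<in> steps N (tgt x) \<Longrightarrow> 0 \<le> p (tgt x) j k * Fn N p n (mult_gen x j k) y"
  proof -
    fix j k assume jk: "(j, k) \<in> steps N (tgt x)"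
    show "0 \<le> p (tgt x) j k * Fn N p n (mult_gen x j k) y"
      using pn[OF inr_tgt[OF Suc.prems] jk] Suc.IH[OF inr_mult_gen[OF Suc.prems jk]] by simp
  qed
  then show ?case
    by (auto intro!: sum_nonneg)
qed

lemma Pn_nonneg:
  assumes pn: "\<And>a j k. a \<in> {1..N} \<Longrightarrow> (j, k) \<in> steps N a \<Longrightarrow> 0 \<le> p a j k"
  shows "inr N x \<Longrightarrow> 0 \<le> Pn N p n x y"
proof (induction n arbitrary: x)
  case 0 then show ?case by simp
next
  case (Suc n)
  have "\<And>j k. (j, k) \<in> steps N (tgt x) \<Longrightarrow> 0 \<le> p (tgt x) j k * Pn N p n (mult_gen x j k) y"
  proof -
    fix j k assume jk: "(j, k) \<in> steps N (tgt x)"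
    show "0 \<le> p (tgt x) j k * Pn N p n (mult_gen x j k) y"
      using pn[OF inr_tgt[OF Suc.prems] jk] Suc.IH[OF inr_mult_gen[OF Suc.prems jk]] by simp
  qed
  then show ?case
    by (auto simp: Pn_Suc intro!: sum_nonneg)
qed



lemma cutC_closed:
  assumes "fst x = t \<and> \<not> (\<exists>l rest. snd x = (k, j) # l # rest)" "x \<noteq> (t, [(k, j)])"
  shows "fst (mult_gen x j' k') = t \<and> \<not> (\<exists>l rest. snd (mult_gen x j' k') = (k, j) # l # rest)"
proof -
  obtain ws where x: "x = (t, ws)" using assms by (cases x) auto
  show ?thesis
  proof (cases ws rule: rev_cases)
    case Nil then show ?thesis by (simp add: x)
  next
    case (snoc ws0 l)
    obtain k1 a where l: "l = (k1, a)" by (cases l)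
    have m: "snd (mult_gen x j' k') \<in> {ws0 @ [(k1, a), (k', j')], ws0, ws0 @ [(k1, j')]}"
      by (simp add: x snoc l mult_gen_snoc)
    show ?thesis using assms m
      by (auto simp: x snoc l Cons_eq_append_conv append_eq_Cons_conv)
  qed
qed

lemma S_step:
  assumes pn: "\<And>a j k. a \<in> {1..N} \<Longrightarrow> (j, k) \<in> steps N a \<Longrightarrow> 0 \<le> p a j k"
    and t: "t \<in> {1..N}" and j: "j \<in> {1..N}" and jt: "j \<noteq> t"
    and w: "wfw j w" and hw: "w = [] \<or> fst (hd w) \<noteq> k"
  shows "Sgf N p (unit_arr t) (t, (k, j) # w) lam = Rgf N p t j k lam * Sgf N p (unit_arr j) (j, w) lam"
proof -
  define C where "C = {x. fst x = t \<and> \<not> (\<exists>l rest. snd x = (k, j) # l # rest)}"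
  let ?y = "(t, (k, j) # w)" and ?y' = "gen_arr t j k"
  have cut: "Pn N p n (unit_arr t) ?y = (\<Sum>m\<le>n. Fn N p m (unit_arr t) ?y' * Pn N p (n - m) ?y' ?y)" for n
  proof (rule cut_lemma[where C = C])
    show "?y' \<in> C" by (simp add: C_def gen_arr_def)
    show "mult_gen x j' k' \<in> C" if "x \<in> C" "x \<noteq> ?y'" for x j' k'
      using cutC_closed[of x t k j j' k'] that by (simp add: C_def gen_arr_def)
    show "?y = ?y'" if "?y \<in> C" using that by (cases w) (auto simp: C_def gen_arr_def)
    show "unit_arr t \<in> C" by (simp add: C_def unit_arr_def)
  qed
  have inr1: "inr N (unit_arr t)" using t by (simp add: inr_def unit_arr_def)
  have inr2: "inr N ?y'" using t j by (simp add: inr_def gen_arr_def)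
  have "Sgf N p (unit_arr t) ?y lam
      = (\<Sum>n. ennreal (\<Sum>m\<le>n. Fn N p m (unit_arr t) ?y' * Pn N p (n - m) ?y' ?y) * ennreal lam ^ n)"
    by (simp add: Sgf_def cut)
  also have "\<dots> = Rgf N p t j k lam * Sgf N p ?y' ?y lam"
    unfolding Rgf_def Sgf_def
    by (rule cauchy_ennreal) (auto intro: Fn_nonneg[OF pn inr1] Pn_nonneg[OF pn inr2])
  also have "Sgf N p ?y' ?y lam = Sgf N p (unit_arr j) (j, w) lam"
  proof -
    have e1: "?y' = gpre t j k (j, [])" by (simp add: gen_arr_def)
    have e2: "?y = gpre t j k (j, w)" using hw by (cases w) (auto simp: gpre_Cons)
    show ?thesis unfolding Sgf_def e1 e2
      using Pn_gpre[of t j "(j, [])" "(j, w)" N p _ k] jt w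
      by (simp add: unit_arr_def)
  qed
  finally show ?thesis .
qed



fun Wd :: "nat \<Rightarrow> nat \<Rightarrow> nat \<Rightarrow> (int \<times> nat) list set" where
  "Wd N 0 t = {[]}"
| "Wd N (Suc d) t = (\<Union>(j, k)\<in>steps N t. (\<lambda>w. (k, j) # w) ` {w \<in> Wd N d j. w = [] \<or> fst (hd w) \<noteq> k})"

definition goodw :: "nat \<Rightarrow> nat \<Rightarrow> (int \<times> nat) list \<Rightarrow> bool" where
  "goodw N t w \<longleftrightarrow> wfw t w \<and> (\<forall>l\<in>set w. snd l \<in> {1..N} \<and> (fst l = 1 \<or> fst l = -1))"

lemma finite_Wd: "finite (Wd N d t)"
  by (induction d arbitrary: t) auto

lemma Wd_good: "w \<in> Wd N d t \<Longrightarrow> length w = d \<and> goodw N t w"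
proof (induction d arbitrary: t w)
  case 0 then show ?case by (simp add: goodw_def)
next
  case (Suc d)
  then obtain j k w' where jk: "(j, k) \<in> steps N t" and w: "w = (k, j) # w'"
    and w': "w' \<in> Wd N d j" and h: "w' = [] \<or> fst (hd w') \<noteq> k" by auto
  from Suc.IH[OF w'] have "length w' = d" "goodw N j w'" by auto
  then show ?case using jk h by (auto simp: goodw_def steps_def w)
qed

lemma good_Wd: "goodw N t w \<Longrightarrow> w \<in> Wd N (length w) t"
proof (induction w arbitrary: t)
  case Nil then show ?case by simp
next
  case (Cons l w)
  obtain k j where l: "l = (k, j)" by (cases l)
  have g: "goodw N j w" and jt: "j \<noteq> t" and jN: "j \<in> {1..N}" and k: "k = 1 \<or> k = -1"
    and h: "w = [] \<or> fst (hd w) \<noteq> k"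
    using Cons.prems by (auto simp: goodw_def l)
  have st: "(j, k) \<in> steps N t" using jt jN k by (auto simp: steps_def)
  have "w \<in> Wd N (length w) j" using Cons.IH[OF g] .
  then show ?case using st h by (auto simp: l)
qed

primrec Rch :: "nat \<Rightarrow> nat \<Rightarrow> arrow \<Rightarrow> arrow set" where
  "Rch N 0 x = {x}"
| "Rch N (Suc n) x = (\<Union>(j, k)\<in>steps N (tgt x). Rch N n (mult_gen x j k))"

lemma finite_Rch: "finite (Rch N n x)"
proof (induction n arbitrary: x)
  case 0 then show ?case by simp
next
  case (Suc n)
  then show ?case by (simp split: prod.split)
qed

lemma Pn_out: "y \<notin> Rch N n x \<Longrightarrow> Pn N p n x y = 0"
proof (induction n arbitrary: x)
  case 0 then show ?case by auto
next
  case (Suc n)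
  have "\<And>j k. (j, k) \<in> steps N (tgt x) \<Longrightarrow> Pn N p n (mult_gen x j k) y = 0"
  proof -
    fix j k assume "(j, k) \<in> steps N (tgt x)"
    then have "y \<notin> Rch N n (mult_gen x j k)" using Suc.prems by auto
    then show "Pn N p n (mult_gen x j k) y = 0" by (rule Suc.IH)
  qed
  then show ?case by (auto simp: Pn_Suc intro!: sum.neutral)
qed

lemma swap_helper:
  fixes q :: "nat \<Rightarrow> int \<Rightarrow> real"
  shows "(\<Sum>(j, k)\<in>S. q j k * (\<Sum>y\<in>R. P j k y * f y)) = (\<Sum>y\<in>R. (\<Sum>(j, k)\<in>S. q j k * P j k y) * f y)"
  by (simp add: sum_distrib_left sum_distrib_right case_prod_beta mult.assoc) (rule sum.swap)

lemma Ex_Rch: "Ex N p n f x = (\<Sum>y\<in>Rch N n x. Pn N p n x y * f y)"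
proof (induction n arbitrary: x)
  case 0 then show ?case by simp
next
  case (Suc n)
  have "Ex N p (Suc n) f x = (\<Sum>(j, k)\<in>steps N (tgt x). p (tgt x) j k * (\<Sum>y\<in>Rch N n (mult_gen x j k). Pn N p n (mult_gen x j k) y * f y))"
    using Suc by simp
  also have "\<dots> = (\<Sum>(j, k)\<in>steps N (tgt x). p (tgt x) j k * (\<Sum>y\<in>Rch N (Suc n) x. Pn N p n (mult_gen x j k) y * f y))"
  proof (rule sum.cong[OF refl], clarify)
    fix j k assume jk: "(j, k) \<in> steps N (tgt x)"
    have "(\<Sum>y\<in>Rch N n (mult_gen x j k). Pn N p n (mult_gen x j k) y * f y)
        = (\<Sum>y\<in>Rch N (Suc n) x. Pn N p n (mult_gen x j k) y * f y)"
      by (rule sum.mono_neutral_left[OF finite_Rch]) (use jk Pn_out in auto)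
    then show "p (tgt x) j k * (\<Sum>y\<in>Rch N n (mult_gen x j k). Pn N p n (mult_gen x j k) y * f y)
      = p (tgt x) j k * (\<Sum>y\<in>Rch N (Suc n) x. Pn N p n (mult_gen x j k) y * f y)" by simp
  qed
  also have "\<dots> = (\<Sum>y\<in>Rch N (Suc n) x. Pn N p (Suc n) x y * f y)"
    by (simp only: Pn_Suc swap_helper)
  finally show ?case .
qed

definition goodx :: "nat \<Rightarrow> arrow \<Rightarrow> bool" where
  "goodx N x \<longleftrightarrow> fst x \<in> {1..N} \<and> goodw N (fst x) (snd x)"

lemma goodx_mult_gen:
  assumes "goodx N x" "(j, k) \<in> steps N (tgt x)"
  shows "goodx N (mult_gen x j k)"
proof -
  have "wfw (fst x) (snd (mult_gen x j k))"
    using assms wfw_mult_gen[of x j k] steps_neq[OF assms(2)] by (simp add: goodx_def goodw_def)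
  moreover have "set (snd (mult_gen x j k)) \<subseteq> set (snd x) \<union> {(k, j)}" by (rule set_mult_gen)
  ultimately show ?thesis using assms by (auto simp: goodx_def goodw_def steps_def)
qed

lemma Rch_good: "y \<in> Rch N n x \<Longrightarrow> goodx N x \<Longrightarrow> goodx N y \<and> fst y = fst x \<and> length (snd y) \<le> length (snd x) + n"
proof (induction n arbitrary: x)
  case 0 then show ?case by simp
next
  case (Suc n)
  then obtain j k where jk: "(j, k) \<in> steps N (tgt x)" and y: "y \<in> Rch N n (mult_gen x j k)" by auto
  have "goodx N (mult_gen x j k)" using goodx_mult_gen[OF Suc.prems(2) jk] .
  from Suc.IH[OF y this] show ?case using length_mult_gen[of x j k] by auto
qed

lemma Ex_Wd:
  assumes i: "i \<in> {1..N}"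
  shows "Ex N p n f (unit_arr i) = (\<Sum>d\<le>n. \<Sum>w\<in>Wd N d i. Pn N p n (unit_arr i) (i, w) * f (i, w))"
proof -
  let ?Y = "(\<lambda>w. (i, w)) ` (\<Union>d\<in>{..n}. Wd N d i)"
  have g0: "goodx N (unit_arr i)" using i by (simp add: goodx_def goodw_def unit_arr_def)
  have sub: "Rch N n (unit_arr i) \<subseteq> ?Y"
  proof
    fix y assume y: "y \<in> Rch N n (unit_arr i)"
    from Rch_good[OF y g0] have "goodx N y" "fst y = i" "length (snd y) \<le> n"
      by (auto simp: unit_arr_def)
    then show "y \<in> ?Y"
      using good_Wd[of N i "snd y"] by (auto simp: goodx_def intro!: image_eqI[of _ _ "snd y"])
  qed
  have fin: "finite ?Y" by (auto intro: finite_Wd)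
  have "Ex N p n f (unit_arr i) = (\<Sum>y\<in>?Y. Pn N p n (unit_arr i) y * f y)"
    unfolding Ex_Rch by (rule sum.mono_neutral_left[OF fin sub]) (auto simp: Pn_out)
  also have "\<dots> = (\<Sum>w\<in>(\<Union>d\<in>{..n}. Wd N d i). Pn N p n (unit_arr i) (i, w) * f (i, w))"
    by (subst sum.reindex) (auto simp: inj_on_def)
  also have "\<dots> = (\<Sum>d\<le>n. \<Sum>w\<in>Wd N d i. Pn N p n (unit_arr i) (i, w) * f (i, w))"
    by (rule sum.UNION_disjoint) (auto simp: finite_Wd dest: Wd_good)
  finally show ?thesis .
qed

lemma Rch_len: "y \<in> Rch N n x \<Longrightarrow> length (snd y) \<le> length (snd x) + n"
proof (induction n arbitrary: x)
  case 0 then show ?case by simp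
next
  case (Suc n)
  then obtain j k where y: "y \<in> Rch N n (mult_gen x j k)" by auto
  from Suc.IH[OF y] show ?case using length_mult_gen[of x j k] by auto
qed

lemma Pn_Wd_zero:
  assumes "w \<in> Wd N d i" "n < d"
  shows "Pn N p n (unit_arr i) (i, w) = 0"
proof (rule Pn_out)
  show "(i, w) \<notin> Rch N n (unit_arr i)"
  proof
    assume "(i, w) \<in> Rch N n (unit_arr i)"
    hence "length w \<le> n" using Rch_len by (fastforce simp: unit_arr_def)
    then show False using Wd_good[OF assms(1)] assms(2) by simp
  qed
qed



lemma G_words:
  assumes pn: "\<And>a j k. a \<in> {1..N} \<Longrightarrow> (j, k) \<in> steps N a \<Longrightarrow> 0 \<le> p a j k"
    and i: "i \<in> {1..N}" and z: "0 < z"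
  shows "Ggf N p M i lam z = (\<Sum>d. \<Sum>w\<in>Wd N d i. ennreal (z powr arr_norm M (i, w)) * Sgf N p (unit_arr i) (i, w) lam)"
proof -
  let ?f = "\<lambda>w. z powr arr_norm M w"
  let ?T = "\<lambda>n d. \<Sum>w\<in>Wd N d i. ennreal (Pn N p n (unit_arr i) (i, w)) * ennreal (?f (i, w))"
  have inr: "inr N (unit_arr i)" using i by (simp add: inr_def unit_arr_def)
  have Pnn: "0 \<le> Pn N p n (unit_arr i) y" for n y using Pn_nonneg[OF pn inr] .
  have step1: "ennreal (Ex N p n ?f (unit_arr i)) = (\<Sum>d. ?T n d)" for n
  proof -
    have "ennreal (Ex N p n ?f (unit_arr i)) = (\<Sum>d\<le>n. ?T n d)"
      unfolding Ex_Wd[OF i]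
      by (subst sum_ennreal[symmetric], simp add: sum_nonneg Pnn)
         (subst sum_ennreal[symmetric], simp add: Pnn, simp add: ennreal_mult Pnn)
    also have "\<dots> = (\<Sum>d. ?T n d)"
      by (rule suminf_finite[symmetric]) (auto simp: Pn_Wd_zero)
    finally show ?thesis .
  qed
  have "Ggf N p M i lam z = (\<Sum>n. (\<Sum>d. ?T n d) * ennreal lam ^ n)"
    by (simp add: Ggf_def step1)
  also have "\<dots> = (\<Sum>n. \<Sum>d. ?T n d * ennreal lam ^ n)"
    by simp
  also have "\<dots> = (\<Sum>d. \<Sum>n. ?T n d * ennreal lam ^ n)"
    by (rule suminf_swap_ennreal)
  also have "\<dots> = (\<Sum>d. \<Sum>w\<in>Wd N d i. \<Sum>n. ennreal (Pn N p n (unit_arr i) (i, w)) * ennreal (?f (i, w)) * ennreal lam ^ n)"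
    by (simp add: sum_distrib_right suminf_sum[OF summableI])
  also have "\<dots> = (\<Sum>d. \<Sum>w\<in>Wd N d i. ennreal (?f (i, w)) * Sgf N p (unit_arr i) (i, w) lam)"
    by (simp add: Sgf_def mult_ac flip: ennreal_suminf_cmult)
  finally show ?thesis .
qed



definition Psi :: "nat \<Rightarrow> (nat \<Rightarrow> nat \<Rightarrow> int \<Rightarrow> real) \<Rightarrow> (nat \<Rightarrow> nat \<Rightarrow> int \<Rightarrow> real) \<Rightarrow> real \<Rightarrow> real
    \<Rightarrow> nat \<Rightarrow> nat \<Rightarrow> int \<Rightarrow> ennreal" where
  "Psi N p M lam z d t \<kappa> = (\<Sum>w\<in>{w \<in> Wd N d t. w = [] \<or> fst (hd w) = \<kappa>}.
      ennreal (z powr arr_norm M (t, w)) * Sgf N p (unit_arr t) (t, w) lam)"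

lemma Psi_0: "0 < z \<Longrightarrow> Psi N p M lam z 0 t \<kappa> = Sgf N p (unit_arr t) (unit_arr t) lam"
proof -
  assume z: "0 < z"
  have "{w \<in> Wd N 0 t. w = [] \<or> fst (hd w) = \<kappa>} = {[]}" by auto
  then show ?thesis using z by (simp add: Psi_def arr_norm_def unit_arr_def)
qed

lemma arr_norm_Cons: "arr_norm M (t, (k, j) # w) = M t j k + arr_norm M (j, w)"
  by (simp add: arr_norm_def)

lemma Psi_Suc:
  assumes pn: "\<And>a j k. a \<in> {1..N} \<Longrightarrow> (j, k) \<in> steps N a \<Longrightarrow> 0 \<le> p a j k"
    and t: "t \<in> {1..N}" and z: "0 < z" and \<kappa>: "\<kappa> = 1 \<or> \<kappa> = -1"
  shows "Psi N p M lam z (Suc d) t \<kappa> = (\<Sum>j\<in>{1..N} - {t}. ennreal (z powr M t j \<kappa>) * Rgf N p t j \<kappa> lam * Psi N p M lam z d j (-\<kappa>))"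
proof -
  let ?A = "\<lambda>j. {w \<in> Wd N d j. w = [] \<or> fst (hd w) = -\<kappa>}"
  let ?h = "\<lambda>w. ennreal (z powr arr_norm M (t, w)) * Sgf N p (unit_arr t) (t, w) lam"
  have sgn: "w = [] \<or> fst (hd w) \<noteq> \<kappa> \<longleftrightarrow> w = [] \<or> fst (hd w) = -\<kappa>" if "w \<in> Wd N d j" for w j
  proof (cases w)
    case (Cons l w')
    have "fst l = 1 \<or> fst l = -1" using Wd_good[OF that] by (auto simp: goodw_def Cons)
    then show ?thesis using \<kappa> by (auto simp: Cons)
  qed simp
  have set_eq: "{w \<in> Wd N (Suc d) t. w = [] \<or> fst (hd w) = \<kappa>} = (\<Union>j\<in>{1..N} - {t}. (\<lambda>w. (\<kappa>, j) # w) ` ?A j)"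
  proof (rule set_eqI, rule iffI)
    fix w assume "w \<in> {w \<in> Wd N (Suc d) t. w = [] \<or> fst (hd w) = \<kappa>}"
    then obtain j k w' where jk: "(j, k) \<in> steps N t" and w: "w = (k, j) # w'" and w': "w' \<in> Wd N d j"
      and h: "w' = [] \<or> fst (hd w') \<noteq> k" and k: "k = \<kappa>" by auto
    have j: "j \<in> {1..N} - {t}" using jk by (simp add: steps_def)
    have "w' \<in> ?A j" using sgn[OF w'] h w' k by auto
    then show "w \<in> (\<Union>j\<in>{1..N} - {t}. (\<lambda>w. (\<kappa>, j) # w) ` ?A j)"
      using j w k by blast
  next
    fix w assume "w \<in> (\<Union>j\<in>{1..N} - {t}. (\<lambda>w. (\<kappa>, j) # w) ` ?A j)"
    then obtain j where j: "j \<in> {1..N} - {t}" and wj: "w \<in> (\<lambda>w. (\<kappa>, j) # w) ` ?A j" by (rule UN_E)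
    from wj obtain w' where w: "w = (\<kappa>, j) # w'" and w': "w' \<in> ?A j" by (rule imageE)
    have "(j, \<kappa>) \<in> steps N t" using j \<kappa> by (auto simp: steps_def)
    moreover have "w' \<in> Wd N d j" "w' = [] \<or> fst (hd w') \<noteq> \<kappa>" using w' sgn[of w' j] by auto
    ultimately have "w \<in> Wd N (Suc d) t" unfolding Wd.simps w
      by (intro UN_I[of "(j, \<kappa>)"]) auto
    then show "w \<in> {w \<in> Wd N (Suc d) t. w = [] \<or> fst (hd w) = \<kappa>}" using w by simp
  qed
  have "Psi N p M lam z (Suc d) t \<kappa> = (\<Sum>j\<in>{1..N} - {t}. \<Sum>w\<in>(\<lambda>w. (\<kappa>, j) # w) ` ?A j. ?h w)"
    unfolding Psi_def set_eq
    by (rule sum.UNION_disjoint) (auto simp: finite_Wd)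
  also have "\<dots> = (\<Sum>j\<in>{1..N} - {t}. \<Sum>w\<in>?A j. ?h ((\<kappa>, j) # w))"
    by (rule sum.cong[OF refl], subst sum.reindex) (auto simp: inj_on_def)
  also have "\<dots> = (\<Sum>j\<in>{1..N} - {t}. ennreal (z powr M t j \<kappa>) * Rgf N p t j \<kappa> lam * Psi N p M lam z d j (-\<kappa>))"
  proof (rule sum.cong[OF refl])
    fix j assume j: "j \<in> {1..N} - {t}"
    have "(\<Sum>w\<in>?A j. ?h ((\<kappa>, j) # w))
        = (\<Sum>w\<in>?A j. ennreal (z powr M t j \<kappa>) * Rgf N p t j \<kappa> lam *
              (ennreal (z powr arr_norm M (j, w)) * Sgf N p (unit_arr j) (j, w) lam))"
    proof (rule sum.cong[OF refl])
      fix w assume w: "w \<in> ?A j"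
      have g: "goodw N j w" using Wd_good w by auto
      have hw: "w = [] \<or> fst (hd w) \<noteq> \<kappa>" using sgn[of w j] w by auto
      have S: "Sgf N p (unit_arr t) (t, (\<kappa>, j) # w) lam = Rgf N p t j \<kappa> lam * Sgf N p (unit_arr j) (j, w) lam"
        by (rule S_step[OF pn t]) (use j g hw in \<open>auto simp: goodw_def\<close>)
      show "?h ((\<kappa>, j) # w) = ennreal (z powr M t j \<kappa>) * Rgf N p t j \<kappa> lam *
              (ennreal (z powr arr_norm M (j, w)) * Sgf N p (unit_arr j) (j, w) lam)"
        using z by (simp add: S arr_norm_Cons powr_add ennreal_mult mult_ac)
    qed
    also have "\<dots> = ennreal (z powr M t j \<kappa>) * Rgf N p t j \<kappa> lam * Psi N p M lam z d j (-\<kappa>)"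
      by (simp add: Psi_def sum_distrib_left)
    finally show "(\<Sum>w\<in>?A j. ?h ((\<kappa>, j) # w)) = \<dots>" .
  qed
  finally show ?thesis .
qed

lemma Psi_total:
  "Psi N p M lam z (Suc d) t 1 + Psi N p M lam z (Suc d) t (-1)
    = (\<Sum>w\<in>Wd N (Suc d) t. ennreal (z powr arr_norm M (t, w)) * Sgf N p (unit_arr t) (t, w) lam)"
proof -
  have ne: "w \<noteq> []" if "w \<in> Wd N (Suc d) t" for w using Wd_good[OF that] by auto
  have pm: "fst (hd w) = 1 \<or> fst (hd w) = -1" if "w \<in> Wd N (Suc d) t" for w
    using Wd_good[OF that] ne[OF that] by (cases w) (auto simp: goodw_def)
  have eq: "Wd N (Suc d) t = {w \<in> Wd N (Suc d) t. w = [] \<or> fst (hd w) = 1} \<union> {w \<in> Wd N (Suc d) t. w = [] \<or> fst (hd w) = -1}"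
    using pm by auto
  show ?thesis unfolding Psi_def
    by (subst (3) eq, rule sum.union_disjoint[symmetric]) (auto simp: finite_Wd simp del: Wd.simps dest: ne)
qed



lemma ifmult: "(if P then 1 else 0) * (x::'a::semiring_1) = (if P then x else 0)"
  by simp

lemma ifmult2: "(x::'a::semiring_1) * (if P then 1 else 0) = (if P then x else 0)"
  by simp

lemma mat_pow_Suc_left:
  assumes "a \<in> {1..m}" "b \<in> {1..m}"
  shows "mat_pow m A (Suc d) a b = (\<Sum>c\<in>{1..m}. A a c * mat_pow m A d c b)"
  using assms
proof (induction d arbitrary: a b)
  case 0
  then show ?case by (simp add: ifmult ifmult2 sum.delta sum.delta')
next
  case (Suc d)
  have "mat_pow m A (Suc (Suc d)) a b = (\<Sum>c\<in>{1..m}. (\<Sum>e\<in>{1..m}. A a e * mat_pow m A d e c) * A c b)"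
    using Suc.IH[OF Suc.prems(1)] by simp
  also have "\<dots> = (\<Sum>e\<in>{1..m}. A a e * (\<Sum>c\<in>{1..m}. mat_pow m A d e c * A c b))"
    by (simp add: sum_distrib_left sum_distrib_right mult.assoc) (rule sum.swap)
  also have "\<dots> = (\<Sum>e\<in>{1..m}. A a e * mat_pow m A (Suc d) e b)" by simp
  finally show ?case .
qed

lemma split2: "sum g {1..2*N} = sum g {1..N} + (\<Sum>j\<in>{1..N}. g (j + N))" for g :: "nat \<Rightarrow> ennreal"
proof -
  have "{1..2*N} = {1..N} \<union> {N+1..N+N}" by auto
  then have "sum g {1..2*N} = sum g {1..N} + sum g {1+N..N+N}"
    by (simp add: sum.union_disjoint add.commute)
  also have "sum g {1+N..N+N} = (\<Sum>j\<in>{1..N}. g (j + N))"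
    by (rule sum.shift_bounds_cl_nat_ivl)
  finally show ?thesis .
qed

definition col :: "nat \<Rightarrow> (nat \<Rightarrow> nat \<Rightarrow> int \<Rightarrow> real) \<Rightarrow> (nat \<Rightarrow> nat \<Rightarrow> int \<Rightarrow> real) \<Rightarrow> real \<Rightarrow> real
    \<Rightarrow> nat \<Rightarrow> nat \<Rightarrow> ennreal" where
  "col N p M lam z d a = (\<Sum>b\<in>{1..2*N}. mat_pow (2*N) (Kmat N p M lam z) d a b * sbar N p lam b)"

lemma col_Suc:
  assumes "a \<in> {1..2*N}"
  shows "col N p M lam z (Suc d) a = (\<Sum>c\<in>{1..2*N}. Kmat N p M lam z a c * col N p M lam z d c)"
proof -
  have "col N p M lam z (Suc d) a = (\<Sum>b\<in>{1..2*N}. (\<Sum>c\<in>{1..2*N}. Kmat N p M lam z a c * mat_pow (2*N) (Kmat N p M lam z) d c b) * sbar N p lam b)"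
    unfolding col_def using mat_pow_Suc_left[OF assms] by (intro sum.cong) auto
  also have "\<dots> = (\<Sum>c\<in>{1..2*N}. Kmat N p M lam z a c * col N p M lam z d c)"
    unfolding col_def by (simp add: sum_distrib_left sum_distrib_right mult.assoc) (rule sum.swap)
  finally show ?thesis .
qed

lemma col_Psi:
  assumes pn: "\<And>a j k. a \<in> {1..N} \<Longrightarrow> (j, k) \<in> steps N a \<Longrightarrow> 0 \<le> p a j k"
    and z: "0 < z"
  shows "t \<in> {1..N} \<Longrightarrow> col N p M lam z d t = Psi N p M lam z d t 1 \<and> col N p M lam z d (t + N) = Psi N p M lam z d t (-1)"
proof (induction d arbitrary: t)
  case 0
  have "col N p M lam z 0 a = sbar N p lam a" if "a \<in> {1..2*N}" for a
    using that by (simp add: col_def ifmult ifmult2 sum.delta sum.delta')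
  then show ?case using 0 z by (simp add: Psi_0 sbar_def)
next
  case (Suc d)
  have t: "t \<in> {1..N}" using Suc.prems .
  have t2: "t \<in> {1..2*N}" using t by auto
  have "col N p M lam z (Suc d) t = (\<Sum>c\<in>{1..N}. Kmat N p M lam z t c * col N p M lam z d c)
       + (\<Sum>j\<in>{1..N}. Kmat N p M lam z t (j + N) * col N p M lam z d (j + N))"
    unfolding col_Suc[OF t2] by (rule split2)
  also have "(\<Sum>c\<in>{1..N}. Kmat N p M lam z t c * col N p M lam z d c) = 0"
    using t by (intro sum.neutral) (auto simp: Kmat_def)
  finally have c1: "col N p M lam z (Suc d) t = (\<Sum>j\<in>{1..N}. Kmat N p M lam z t (j + N) * col N p M lam z d (j + N))"
    by simp
  also have "\<dots> = (\<Sum>j\<in>{1..N}. (if t = j then 0 else ennreal (z powr M t j 1) * Rgf N p t j 1 lam) * Psi N p M lam z d j (-1))"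
    using t Suc.IH by (intro sum.cong) (auto simp: Kmat_def Bmat_def)
  also have "\<dots> = (\<Sum>j\<in>{1..N} - {t}. ennreal (z powr M t j 1) * Rgf N p t j 1 lam * Psi N p M lam z d j (-1))"
    by (rule sum.mono_neutral_cong_right) auto
  also have "\<dots> = Psi N p M lam z (Suc d) t 1"
    using Psi_Suc[OF pn t z, where \<kappa> = 1] by simp
  finally have A: "col N p M lam z (Suc d) t = Psi N p M lam z (Suc d) t 1" .
  have t3: "t + N \<in> {1..2*N}" using t by auto
  have "col N p M lam z (Suc d) (t + N) = (\<Sum>c\<in>{1..N}. Kmat N p M lam z (t + N) c * col N p M lam z d c)
       + (\<Sum>j\<in>{1..N}. Kmat N p M lam z (t + N) (j + N) * col N p M lam z d (j + N))"
    unfolding col_Suc[OF t3] by (rule split2)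
  also have "(\<Sum>j\<in>{1..N}. Kmat N p M lam z (t + N) (j + N) * col N p M lam z d (j + N)) = 0"
    using t by (intro sum.neutral) (auto simp: Kmat_def)
  finally have "col N p M lam z (Suc d) (t + N) = (\<Sum>j\<in>{1..N}. Kmat N p M lam z (t + N) j * col N p M lam z d j)"
    by simp
  also have "\<dots> = (\<Sum>j\<in>{1..N}. (if t = j then 0 else ennreal (z powr M t j (-1)) * Rgf N p t j (-1) lam) * Psi N p M lam z d j 1)"
    using t Suc.IH by (intro sum.cong) (auto simp: Kmat_def Bmat_def)
  also have "\<dots> = (\<Sum>j\<in>{1..N} - {t}. ennreal (z powr M t j (-1)) * Rgf N p t j (-1) lam * Psi N p M lam z d j 1)"
    by (rule sum.mono_neutral_cong_right) auto
  also have "\<dots> = Psi N p M lam z (Suc d) t (-1)"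
    using Psi_Suc[OF pn t z, where \<kappa> = "-1"] by simp
  finally show ?case using A by simp
qed



theorem proposition5p9:
  fixes N :: nat
    and p M :: "nat \<Rightarrow> nat \<Rightarrow> int \<Rightarrow> real"
    and i :: nat
    and lam z :: real
  assumes "N \<ge> 3"
    and p_range: "\<And>a j k. a \<in> {1..N} \<Longrightarrow> (j, k) \<in> steps N a \<Longrightarrow> 0 < p a j k \<and> p a j k < 1"
    and p_sum: "\<And>a. a \<in> {1..N} \<Longrightarrow> (\<Sum>(j, k)\<in>steps N a. p a j k) = 1"
    and M_nonneg: "\<And>a j k. a \<in> {1..N} \<Longrightarrow> (j, k) \<in> steps N a \<Longrightarrow> 0 \<le> M a j k"
    and "i \<in> {1..N}"
    and "0 \<le> lam"
    and "0 < z"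
  shows "Ggf N p M i lam z =
           Sgf N p (unit_arr i) (unit_arr i) lam
           + (\<Sum>d. \<Sum>a\<in>{1..2*N}. \<Sum>b\<in>{1..2*N}.
                 vbar N i a * mat_pow (2*N) (Kmat N p M lam z) (Suc d) a b * sbar N p lam b)"
proof -
  have i: "i \<in> {1..N}" and z: "0 < z" using assms by auto
  have pn: "\<And>a j k. a \<in> {1..N} \<Longrightarrow> (j, k) \<in> steps N a \<Longrightarrow> 0 \<le> p a j k"
    using p_range by (meson less_imp_le)
  define T where "T d = (\<Sum>w\<in>Wd N d i. ennreal (z powr arr_norm M (i, w)) * Sgf N p (unit_arr i) (i, w) lam)" for d
  have "Ggf N p M i lam z = (\<Sum>d. T d)" using G_words[OF pn i z] by (simp add: T_def)
  also have "\<dots> = (\<Sum>d. T (d + 1)) + (\<Sum>j<1. T j)" by (rule suminf_offset[OF summableI])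
  also have "(\<Sum>j<1. T j) = Sgf N p (unit_arr i) (unit_arr i) lam"
    using z by (simp add: T_def arr_norm_def unit_arr_def)
  also have "(\<lambda>d. T (d + 1)) = (\<lambda>d. \<Sum>a\<in>{1..2*N}. \<Sum>b\<in>{1..2*N}.
                 vbar N i a * mat_pow (2*N) (Kmat N p M lam z) (Suc d) a b * sbar N p lam b)"
  proof
    fix d
    have "T (d + 1) = col N p M lam z (Suc d) i + col N p M lam z (Suc d) (i + N)"
      using Psi_total[of N p M lam z d i] col_Psi[OF pn z i, where d = "Suc d" and M = M and lam = lam] by (simp add: T_def)
    also have "\<dots> = (\<Sum>a\<in>{1..2*N}. vbar N i a * col N p M lam z (Suc d) a)"
    proof -
      have "(\<Sum>a\<in>{1..2*N}. vbar N i a * col N p M lam z (Suc d) a)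
          = (\<Sum>a\<in>{1..N}. vbar N i a * col N p M lam z (Suc d) a)
            + (\<Sum>j\<in>{1..N}. vbar N i (j + N) * col N p M lam z (Suc d) (j + N))"
        by (rule split2)
      also have "(\<Sum>a\<in>{1..N}. vbar N i a * col N p M lam z (Suc d) a) = col N p M lam z (Suc d) i"
      proof -
        have "(\<Sum>a\<in>{1..N}. vbar N i a * col N p M lam z (Suc d) a)
            = (\<Sum>a\<in>{1..N}. if a = i then col N p M lam z (Suc d) a else 0)"
          using i by (intro sum.cong) (auto simp: vbar_def)
        then show ?thesis using i by simp
      qed
      also have "(\<Sum>j\<in>{1..N}. vbar N i (j + N) * col N p M lam z (Suc d) (j + N)) = col N p M lam z (Suc d) (i + N)"
      proof -
        have "(\<Sum>j\<in>{1..N}. vbar N i (j + N) * col N p M lam z (Suc d) (j + N))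
            = (\<Sum>j\<in>{1..N}. if j = i then col N p M lam z (Suc d) (j + N) else 0)"
          using i by (intro sum.cong) (auto simp: vbar_def)
        then show ?thesis using i by simp
      qed
      finally show ?thesis by simp
    qed
    also have "\<dots> = (\<Sum>a\<in>{1..2*N}. \<Sum>b\<in>{1..2*N}.
                 vbar N i a * mat_pow (2*N) (Kmat N p M lam z) (Suc d) a b * sbar N p lam b)"
      by (simp add: col_def sum_distrib_left mult.assoc del: mat_pow.simps)
    finally show "T (d + 1) = \<dots>" .
  qed
  finally show ?thesis by (simp add: add.commute)
qed

end
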